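(* Let $\sigma:\Delta_d\to\mathbb{R}^N$ be continuous and of class $C^1$ on every open face of $\Delta_d$. If $\sigma$ has finite volume, then so does its cone $\hat\sigma:\Delta_{d+1}\to\mathbb{R}^N$.
   Context: The standard $d$-simplex is $\Delta_d=\{(a_1,\dots,a_d)\in\mathbb{R}^d\mid a_i\ge 0,\ \sum a_i\le 1\}$; points of $\Delta_{d+1}$ are written $(a_0,a_1,\dots,a_d)$. An open face is the interior of a face of any dimension. A map $\tau:\Delta_e\to\mathbb{R}^N$ which is continuous and $C^1$ on open faces has finite volume if $\int_{\Delta_e}\tau^*(\omega)$ (the pull-back being defined on the interior) converges absolutely for every continuous $e$-form $\omega$ on $\tau(\Delta_e)$. The cone of $\sigma$ is $\hat\sigma(a_0,\dots,a_d)=A\,\sigma(a_1/A,\dots,a_d/A)$ where $A=\sum_{i=0}^d a_i$, if $A\neq 0$, and $\hat\sigma(0)=0$; it is continuous and $C^1$ on all open faces of $\Delta_{d+1}$. *)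

theory Defs
  imports "HOL-Analysis.Analysis"
begin

text \<open>The standard simplex on a finite index type 'd (so d = CARD('d)).
  For Delta_{d+1} we use the index type 'd option, coordinate None being a_0.\<close>
definition std_simplex :: "(real ^ 'd::finite) set" where
  "std_simplex = {a. (\<forall>i. 0 \<le> a $ i) \<and> (\<Sum>i\<in>UNIV. a $ i) \<le> 1}"

definition C1_on :: "('a::real_normed_vector \<Rightarrow> 'b::real_normed_vector) \<Rightarrow> 'a set \<Rightarrow> bool" where
  "C1_on f U \<longleftrightarrow> (\<exists>D::'a \<Rightarrow> ('a \<Rightarrow>\<^sub>L 'b).
      (\<forall>x\<in>U. (f has_derivative blinfun_apply (D x)) (at x within U)) \<and> continuous_on U D)"

definition C1_on_open_faces :: "(real ^ 'e::finite \<Rightarrow> real ^ 'n::finite) \<Rightarrow> bool" where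
  "C1_on_open_faces \<tau> \<longleftrightarrow>
     (\<forall>F. F face_of (std_simplex :: (real ^ 'e) set) \<and> F \<noteq> {} \<longrightarrow> C1_on \<tau> (rel_interior F))"

definition alt_multilinear :: "(('e::finite \<Rightarrow> 'v::real_vector) \<Rightarrow> real) \<Rightarrow> bool" where
  "alt_multilinear \<phi> \<longleftrightarrow>
     (\<forall>vs k. linear (\<lambda>v. \<phi> (vs(k := v)))) \<and>
     (\<forall>vs i j. i \<noteq> j \<and> vs i = vs j \<longrightarrow> \<phi> vs = 0)"

definition continuous_form ::
    "(real ^ 'n::finite) set \<Rightarrow> (real ^ 'n \<Rightarrow> ('e::finite \<Rightarrow> real ^ 'n) \<Rightarrow> real) \<Rightarrow> bool" where
  "continuous_form S w \<longleftrightarrow>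
     (\<forall>x\<in>S. alt_multilinear (w x)) \<and> (\<forall>vs. continuous_on S (\<lambda>x. w x vs))"

text \<open>Coefficient of the pull-back tau^* w with respect to da_1 ... da_e at a point a
  of the interior: w(tau a)(d_1 tau(a), ..., d_e tau(a)).\<close>
definition pullback_density ::
    "(real ^ 'e::finite \<Rightarrow> real ^ 'n::finite) \<Rightarrow> (real ^ 'n \<Rightarrow> ('e \<Rightarrow> real ^ 'n) \<Rightarrow> real)
      \<Rightarrow> real ^ 'e \<Rightarrow> real" where
  "pullback_density \<tau> w a = w (\<tau> a) (\<lambda>k. frechet_derivative \<tau> (at a) (axis k 1))"

definition finite_volume :: "(real ^ 'e::finite \<Rightarrow> real ^ 'n::finite) \<Rightarrow> bool" where
  "finite_volume \<tau> \<longleftrightarrow>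
     (\<forall>w :: real ^ 'n \<Rightarrow> ('e \<Rightarrow> real ^ 'n) \<Rightarrow> real.
        continuous_form (\<tau> ` std_simplex) w \<longrightarrow>
        pullback_density \<tau> w absolutely_integrable_on interior (std_simplex :: (real ^ 'e) set))"

definition simplex_cone :: "(real ^ 'd::finite \<Rightarrow> real ^ 'n::finite) \<Rightarrow> real ^ ('d option) \<Rightarrow> real ^ 'n" where
  "simplex_cone \<sigma> a = (let A = (\<Sum>i\<in>UNIV. a $ i) in
     if A \<noteq> 0 then A *\<^sub>R \<sigma> (\<chi> i. a $ Some i / A) else 0)"

end

theory Submission
  imports Defs
begin



lemma am_lin: "alt_multilinear \<theta> \<Longrightarrow> linear (\<lambda>v. \<theta> (vs(k := v)))"
  unfolding alt_multilinear_def by blast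

lemma am_zero: "alt_multilinear \<theta> \<Longrightarrow> i \<noteq> j \<Longrightarrow> vs i = vs j \<Longrightarrow> \<theta> vs = 0"
  unfolding alt_multilinear_def by blast

lemma am_add: "alt_multilinear \<theta> \<Longrightarrow> \<theta> (vs(k := a + b)) = \<theta> (vs(k := a)) + \<theta> (vs(k := b))"
  using linear_add[OF am_lin] by blast

lemma am_scale: "alt_multilinear \<theta> \<Longrightarrow> \<theta> (vs(k := c *\<^sub>R a)) = c * \<theta> (vs(k := a))"
  using linear_scale[OF am_lin, of \<theta> vs k c a] by simp

lemma am_sum: "alt_multilinear \<theta> \<Longrightarrow> \<theta> (vs(k := (\<Sum>j\<in>J. g j))) = (\<Sum>j\<in>J. \<theta> (vs(k := g j)))"
  using linear_sum[OF am_lin, of \<theta> vs k g J] by simp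

lemma am_diff: "alt_multilinear \<theta> \<Longrightarrow> \<theta> (vs(k := a - b)) = \<theta> (vs(k := a)) - \<theta> (vs(k := b))"
  using linear_diff[OF am_lin] by blast

lemma vec_axis_expand: "(x::real^'n) = (\<Sum>j\<in>UNIV. (x $ j) *\<^sub>R axis j 1)"
  by (simp add: vec_eq_iff sum_component axis_def if_distrib cong: if_cong)

lemma am_expand_gen:
  fixes \<theta> :: "('e::finite \<Rightarrow> real^'n) \<Rightarrow> real"
  assumes am: "alt_multilinear \<theta>" and fin: "finite T"
  shows "\<theta> (\<lambda>k. if k \<in> T then v k else c k) =
    (\<Sum>g\<in>PiE T (\<lambda>_. UNIV). (\<Prod>k\<in>T. v k $ g k) * \<theta> (\<lambda>k. if k \<in> T then axis (g k) 1 else c k))"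
  using fin
proof (induction T arbitrary: c rule: finite_induct)
  case empty
  then show ?case by simp
next
  case (insert x T)
  have e1: "(\<lambda>k. if k \<in> insert x T then v k else c k) = (\<lambda>k. if k \<in> T then v k else (c(x := v x)) k)"
    by auto
  have e2: "(\<lambda>k. if k \<in> T then axis (g k) 1 else (c(x := u)) k) =
     (\<lambda>k. if k \<in> T then axis (g k) 1 else c k)(x := u)" for g u
    using insert.hyps by auto
  have "\<theta> (\<lambda>k. if k \<in> insert x T then v k else c k) =
    (\<Sum>g\<in>PiE T (\<lambda>_. UNIV). (\<Prod>k\<in>T. v k $ g k) * \<theta> ((\<lambda>k. if k \<in> T then axis (g k) 1 else c k)(x := v x)))"
    unfolding e1 insert.IH e2 ..
  also have "\<dots> = (\<Sum>g\<in>PiE T (\<lambda>_. UNIV). \<Sum>j\<in>UNIV. (\<Prod>k\<in>T. v k $ g k) * (v x $ j * \<theta> ((\<lambda>k. if k \<in> T then axis (g k) 1 else c k)(x := axis j 1))))"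
    apply (rule sum.cong[OF refl])
    apply (subst vec_axis_expand[of "v x"])
    apply (simp only: am_sum[OF am] am_scale[OF am] sum_distrib_left)
    done
  also have "\<dots> = (\<Sum>(g,j)\<in>PiE T (\<lambda>_. UNIV) \<times> UNIV. (\<Prod>k\<in>T. v k $ g k) * (v x $ j * \<theta> ((\<lambda>k. if k \<in> T then axis (g k) 1 else c k)(x := axis j 1))))"
    by (simp add: sum.cartesian_product)
  also have "\<dots> = (\<Sum>g\<in>PiE (insert x T) (\<lambda>_. UNIV). (\<Prod>k\<in>insert x T. v k $ g k) * \<theta> (\<lambda>k. if k \<in> insert x T then axis (g k) 1 else c k))"
  proof (rule sum.reindex_bij_witness[of _ "\<lambda>g. (g(x := undefined), g x)" "\<lambda>(g,j). g(x := j)"])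
    fix a :: "('e \<Rightarrow> 'n) \<times> 'n" assume a: "a \<in> PiE T (\<lambda>_. UNIV) \<times> UNIV"
    obtain g j where gj: "a = (g, j)" by (cases a)
    have gx: "g x = undefined" using a gj insert.hyps by (auto simp: PiE_def extensional_def)
    show "(case a of (g, j) \<Rightarrow> g(x := j)) \<in> PiE (insert x T) (\<lambda>_. UNIV)"
      using a gj by (auto simp: PiE_def extensional_def)
    show "(\<lambda>g. (g(x := undefined), g x)) (case a of (g, j) \<Rightarrow> g(x := j)) = a"
      using gj gx by auto
    have A: "(\<Prod>k\<in>insert x T. v k $ (g(x := j)) k) = v x $ j * (\<Prod>k\<in>T. v k $ g k)"
    proof -
      have "(\<Prod>k\<in>T. v k $ (g(x := j)) k) = (\<Prod>k\<in>T. v k $ g k)"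
        using insert.hyps by (intro prod.cong) auto
      then show ?thesis using insert.hyps by simp
    qed
    have B: "(\<lambda>k. if k \<in> insert x T then axis ((g(x := j)) k) 1 else c k) =
       (\<lambda>k. if k \<in> T then axis (g k) 1 else c k)(x := axis j 1)"
      using insert.hyps by auto
    show "(\<Prod>k\<in>insert x T. v k $ (case a of (g, j) \<Rightarrow> g(x := j)) k) *
          \<theta> (\<lambda>k. if k \<in> insert x T then axis ((case a of (g, j) \<Rightarrow> g(x := j)) k) 1 else c k) =
         (case a of (g, j) \<Rightarrow> (\<Prod>k\<in>T. v k $ g k) * (v x $ j * \<theta> ((\<lambda>k. if k \<in> T then axis (g k) 1 else c k)(x := axis j 1))))"
      unfolding gj prod.case A B by (simp add: mult_ac)
  next
    fix g assume g: "g \<in> PiE (insert x T) (\<lambda>_. UNIV)"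
    show "(\<lambda>g. (g(x := undefined), g x)) g \<in> PiE T (\<lambda>_. UNIV) \<times> UNIV"
      using g insert.hyps by (auto simp: PiE_def extensional_def)
    show "(case (\<lambda>g. (g(x := undefined), g x)) g of (g, j) \<Rightarrow> g(x := j)) = g"
      by auto
  qed
  finally show ?case .
qed

lemma am_expand:
  fixes \<theta> :: "('e::finite \<Rightarrow> real^'n::finite) \<Rightarrow> real"
  assumes am: "alt_multilinear \<theta>"
  shows "\<theta> v = (\<Sum>g\<in>UNIV. (\<Prod>k\<in>UNIV. v k $ g k) * \<theta> (\<lambda>k. axis (g k) 1))"
  using am_expand_gen[OF am, of UNIV v v] by (simp add: PiE_UNIV)

lemma am_swap:
  assumes am: "alt_multilinear \<theta>" and ij: "i \<noteq> j"
  shows "\<theta> (v \<circ> Transposition.transpose i j) = - \<theta> v"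
proof -
  let ?u = "v i + v j"
  have sw: "v \<circ> Transposition.transpose i j = v(j := v i, i := v j)"
    using ij by (auto simp: Transposition.transpose_def)
  have z: "\<theta> (v(i := ?u, j := ?u)) = 0"
    by (rule am_zero[OF am ij]) (use ij in simp)
  have s1: "\<theta> (v(i := ?u, j := ?u)) = \<theta> (v(i := ?u, j := v i)) + \<theta> (v(i := ?u, j := v j))"
    by (rule am_add[OF am])
  have s2: "\<theta> (v(i := ?u, j := v i)) = \<theta> (v(j := v i, i := ?u))"
    using ij by (simp add: fun_upd_twist)
  have s3: "\<theta> (v(j := v i, i := ?u)) = \<theta> (v(j := v i, i := v i)) + \<theta> (v(j := v i, i := v j))"
    by (rule am_add[OF am])
  have s4: "\<theta> (v(j := v i, i := v i)) = 0"
    by (rule am_zero[OF am ij]) (use ij in simp)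
  have e5: "v(i := ?u, j := v j) = v(i := ?u)" using ij by (simp add: fun_eq_iff)
  have s6: "\<theta> (v(i := ?u)) = \<theta> (v(i := v i)) + \<theta> (v(i := v j))"
    by (rule am_add[OF am])
  have s7: "\<theta> (v(i := v j)) = 0"
    by (rule am_zero[OF am ij]) (use ij in simp)
  have "0 = \<theta> (v(j := v i, i := v j)) + \<theta> v"
    using z s1 s2 s3 s4 s6 s7 unfolding e5 by simp
  then show ?thesis unfolding sw by linarith
qed

lemma am_perm:
  fixes \<theta> :: "('e::finite \<Rightarrow> 'v::real_vector) \<Rightarrow> real"
  assumes am: "alt_multilinear \<theta>" and p: "p permutes (UNIV :: 'e set)"
  shows "\<theta> (v \<circ> p) = of_int (sign p) * \<theta> v"
  using p finite_class.finite_UNIV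
proof (induction p arbitrary: v rule: permutes_induct)
  case id
  then show ?case by simp
next
  case (swap a b p)
  have "\<theta> (v \<circ> (Transposition.transpose a b \<circ> p)) = \<theta> ((v \<circ> Transposition.transpose a b) \<circ> p)"
    by (simp add: comp_assoc)
  also have "\<dots> = of_int (sign p) * \<theta> (v \<circ> Transposition.transpose a b)"
    by (rule swap.IH)
  also have "\<dots> = - of_int (sign p) * \<theta> v"
    using am_swap[OF am swap.hyps(3)] by simp
  also have "sign (Transposition.transpose a b \<circ> p) = - sign p"
  proof -
    have "permutation p" by (rule permutes_imp_permutation[OF finite_class.finite_UNIV]) (use swap.hyps in simp)
    then show ?thesis
      using sign_compose[OF permutation_swap_id \<open>permutation p\<close>, of a b] swap.hyps(3)
      by (simp add: sign_swap_id)
  qed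
  ultimately show ?case by (simp only: of_int_minus)
qed

lemma am_det_identity:
  fixes \<theta> :: "('e::finite \<Rightarrow> real^'n::finite) \<Rightarrow> real"
  assumes am: "alt_multilinear \<theta>"
  shows "real (card {p. p permutes (UNIV :: 'e set)}) * \<theta> v =
    (\<Sum>g\<in>UNIV. \<theta> (\<lambda>k. axis (g k) 1) * det (\<chi> k j. v k $ g j))"
proof -
  let ?P = "{p. p permutes (UNIV :: 'e set)}"
  let ?E = "\<lambda>g::'e \<Rightarrow> 'n. (\<lambda>k. axis (g k) (1::real))"
  have inner: "(\<Sum>g\<in>UNIV. \<theta> (?E g) * (\<Prod>k\<in>UNIV. v k $ g (p k))) = of_int (sign p) * \<theta> v"
    if p: "p permutes (UNIV :: 'e set)" for p
  proof -
    have "(\<Sum>g\<in>UNIV. \<theta> (?E g) * (\<Prod>k\<in>UNIV. v k $ g (p k))) =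
          (\<Sum>h\<in>UNIV. \<theta> (?E (h \<circ> inv p)) * (\<Prod>k\<in>UNIV. v k $ h k))"
      by (rule sum.reindex_bij_witness[of _ "\<lambda>h. h \<circ> inv p" "\<lambda>g. g \<circ> p"])
         (auto simp: permutes_inverses[OF p] o_def)
    also have "\<dots> = (\<Sum>h\<in>UNIV. of_int (sign p) * (\<theta> (?E h) * (\<Prod>k\<in>UNIV. v k $ h k)))"
    proof (rule sum.cong[OF refl])
      fix h :: "'e \<Rightarrow> 'n"
      have "?E (h \<circ> inv p) = ?E h \<circ> inv p" by (simp add: o_def)
      then have "\<theta> (?E (h \<circ> inv p)) = of_int (sign (inv p)) * \<theta> (?E h)"
        using am_perm[OF am permutes_inv[OF p]] by simp
      also have "sign (inv p) = sign p"
        using p by (simp add: sign_inverse permutes_imp_permutation)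
      finally show "\<theta> (?E (h \<circ> inv p)) * (\<Prod>k\<in>UNIV. v k $ h k) =
          of_int (sign p) * (\<theta> (?E h) * (\<Prod>k\<in>UNIV. v k $ h k))" by simp
    qed
    also have "\<dots> = of_int (sign p) * \<theta> v"
      by (subst am_expand[OF am, of v]) (simp add: sum_distrib_left mult_ac)
    finally show ?thesis .
  qed
  have "(\<Sum>g\<in>UNIV. \<theta> (?E g) * det (\<chi> k j. v k $ g j)) =
        (\<Sum>g\<in>UNIV. \<Sum>p\<in>?P. of_int (sign p) * (\<theta> (?E g) * (\<Prod>k\<in>UNIV. v k $ g (p k))))"
    by (simp add: det_def sum_distrib_left mult_ac)
  also have "\<dots> = (\<Sum>p\<in>?P. of_int (sign p) * (\<Sum>g\<in>UNIV. \<theta> (?E g) * (\<Prod>k\<in>UNIV. v k $ g (p k))))"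
    by (subst sum.swap) (simp add: sum_distrib_left)
  also have "\<dots> = (\<Sum>p\<in>?P. \<theta> v)"
    by (rule sum.cong[OF refl]) (simp add: inner mult.assoc[symmetric] of_int_mult[symmetric])
  finally show ?thesis by simp
qed

lemma det_form_am:
  fixes g :: "'e::finite \<Rightarrow> 'n::finite"
  shows "alt_multilinear (\<lambda>vs::'e \<Rightarrow> real^'n. det (\<chi> k j. vs k $ g j))"
  unfolding alt_multilinear_def
proof (intro conjI allI impI)
  fix vs :: "'e \<Rightarrow> real^'n" and k
  have e: "(\<chi> i j. (vs(k := v)) i $ g j) = (\<chi> i. if i = k then (\<chi> j. v $ g j) else (\<chi> j. vs i $ g j))" for v :: "real^'n"
    by (simp add: vec_eq_iff)
  show "linear (\<lambda>v. det (\<chi> i j. (vs(k := v)) i $ g j))"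
    unfolding e
  proof (rule linearI)
    fix a b :: "real^'n"
    have e2: "(\<chi> j. (a + b) $ g j) = (\<chi> j. a $ g j) + (\<chi> j. b $ g j)" by (simp add: vec_eq_iff)
    show "det (\<chi> i. if i = k then \<chi> j. (a + b) $ g j else \<chi> j. vs i $ g j) =
        det (\<chi> i. if i = k then \<chi> j. a $ g j else \<chi> j. vs i $ g j) +
        det (\<chi> i. if i = k then \<chi> j. b $ g j else \<chi> j. vs i $ g j)"
      unfolding e2 by (rule det_row_add)
  next
    fix c :: real and a :: "real^'n"
    have e3: "(\<chi> j. (c *\<^sub>R a) $ g j) = c *s (\<chi> j. a $ g j)" by (simp add: vec_eq_iff)
    show "det (\<chi> i. if i = k then \<chi> j. (c *\<^sub>R a) $ g j else \<chi> j. vs i $ g j) =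
        c *\<^sub>R det (\<chi> i. if i = k then \<chi> j. a $ g j else \<chi> j. vs i $ g j)"
      unfolding e3 using det_row_mul[of k c "\<lambda>_. \<chi> j. a $ g j" "\<lambda>i. \<chi> j. vs i $ g j"] by simp
  qed
next
  fix vs :: "'e \<Rightarrow> real^'n" and i j
  assume "i \<noteq> j \<and> vs i = vs j"
  then show "det (\<chi> k j. vs k $ g j) = 0"
    by (intro det_identical_rows[of i j]) (auto simp: row_def vec_eq_iff)
qed

lemma am_shift:
  fixes \<theta> :: "('e::finite \<Rightarrow> 'v::real_vector) \<Rightarrow> real"
  assumes am: "alt_multilinear \<theta>" and c0: "c z = 0" and fin: "finite T" and zT: "z \<notin> T"
  shows "\<theta> (\<lambda>k. if k \<in> T then c k else u + c k) = \<theta> (\<lambda>k. u + c k)"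
  using fin zT
proof (induction T rule: finite_induct)
  case empty
  then show ?case by simp
next
  case (insert x T)
  let ?vs = "\<lambda>k. if k \<in> T then c k else u + c k"
  have xz: "x \<noteq> z" using insert by auto
  have e1: "(\<lambda>k. if k \<in> insert x T then c k else u + c k) = ?vs(x := c x)"
    using insert by auto
  have e2: "?vs = ?vs(x := u + c x)"
    using insert by auto
  have "\<theta> (?vs(x := u)) = 0"
    by (rule am_zero[OF am xz]) (use insert c0 xz in auto)
  then have "\<theta> ?vs = \<theta> (?vs(x := c x))"
    using am_add[OF am, of ?vs x u "c x"] e2 by simp
  then show ?case unfolding e1 using insert by simp
qed

lemma cone_alg:
  fixes \<theta> :: "('d::finite option \<Rightarrow> real^'n) \<Rightarrow> real" and L :: "real^'d \<Rightarrow> real^'n"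
  assumes am: "alt_multilinear \<theta>" and lin: "linear L"
  shows "\<theta> (\<lambda>k. s - L b + L (\<chi> i. if k = Some i then 1 else 0)) =
         \<theta> (\<lambda>k. case k of None \<Rightarrow> s | Some j \<Rightarrow> L (axis j 1))"
proof -
  let ?c = "\<lambda>k. L (\<chi> i. if k = Some i then 1 else 0)"
  let ?u = "s - L b"
  have c0: "?c None = 0"
    using linear_0[OF lin] by (simp add: zero_vec_def[symmetric])
  have cS: "?c (Some j) = L (axis j 1)" for j
    by (rule arg_cong[where f=L]) (simp add: vec_eq_iff axis_def)
  have "\<theta> (\<lambda>k. ?u + ?c k) = \<theta> (\<lambda>k. if k \<in> UNIV - {None} then ?c k else ?u + ?c k)"
    by (rule am_shift[OF am, of ?c None, OF c0, symmetric]) auto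
  also have "(\<lambda>k. if k \<in> UNIV - {None} then ?c k else ?u + ?c k) =
     (\<lambda>k. case k of None \<Rightarrow> s | Some j \<Rightarrow> L (axis j 1))(None := ?u)"
    using c0 cS by (auto simp: fun_eq_iff split: option.split)
  also have "\<theta> \<dots> = \<theta> ((\<lambda>k. case k of None \<Rightarrow> s | Some j \<Rightarrow> L (axis j 1))(None := s))
      - \<theta> ((\<lambda>k. case k of None \<Rightarrow> s | Some j \<Rightarrow> L (axis j 1))(None := L b))"
    by (rule am_diff[OF am])
  also have "(\<lambda>k. case k of None \<Rightarrow> s | Some j \<Rightarrow> L (axis j 1))(None := s) =
      (\<lambda>k. case k of None \<Rightarrow> s | Some j \<Rightarrow> L (axis j 1))"
    by (auto simp: fun_eq_iff split: option.split)
  also have "\<theta> ((\<lambda>k. case k of None \<Rightarrow> s | Some j \<Rightarrow> L (axis j 1))(None := L b)) = 0"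
  proof -
    let ?W = "(\<lambda>k. case k of None \<Rightarrow> s | Some j \<Rightarrow> L (axis j 1))"
    have "L b = (\<Sum>j\<in>UNIV. (b $ j) *\<^sub>R L (axis j 1))"
      by (subst vec_axis_expand[of b]) (simp add: linear_sum[OF lin] linear_scale[OF lin])
    then have "\<theta> (?W(None := L b)) = (\<Sum>j\<in>UNIV. b $ j * \<theta> (?W(None := L (axis j 1))))"
      by (simp add: am_sum[OF am] am_scale[OF am])
    also have "\<dots> = 0"
    proof (rule sum.neutral, rule ballI)
      fix j
      have "\<theta> (?W(None := L (axis j 1))) = 0"
        by (rule am_zero[OF am, of None "Some j"]) auto
      then show "b $ j * \<theta> (?W(None := L (axis j 1))) = 0" by simp
    qed
    finally show ?thesis .
  qed
  finally show ?thesis by simp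
qed



definition osimp :: "(real ^ 'e::finite) set" where
  "osimp = {a. (\<forall>i. 0 < a $ i) \<and> (\<Sum>i\<in>UNIV. a $ i) < 1}"

lemma sum_UNIV_option: "(\<Sum>k\<in>(UNIV :: 'a::finite option set). f k) = f None + (\<Sum>i\<in>UNIV. f (Some i))"
  by (simp add: UNIV_option_conv sum.reindex)

lemma sum_axis_comp: "(\<Sum>j\<in>UNIV. (axis i (c::real) :: real^'e::finite) $ j) = c"
  by (simp add: axis_def)

lemma open_osimp: "open (osimp :: (real^'e::finite) set)"
proof -
  have eq: "osimp = (\<Inter>i\<in>UNIV. {a::real^'e. 0 < a $ i}) \<inter> {a. (\<Sum>i\<in>UNIV. a $ i) < 1}"
    by (auto simp: osimp_def)
  have "open {a::real^'e. 0 < a $ i}" for i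
    by (rule open_Collect_less) (intro continuous_intros)+
  then have "open (\<Inter>i\<in>UNIV. {a::real^'e. 0 < a $ i})"
    by (intro open_INT) auto
  moreover have "open {a::real^'e. (\<Sum>i\<in>UNIV. a $ i) < 1}"
    by (rule open_Collect_less) (intro continuous_intros)+
  ultimately show ?thesis unfolding eq by (rule open_Int)
qed

lemma osimp_subset: "osimp \<subseteq> std_simplex"
  by (auto simp: osimp_def std_simplex_def less_imp_le)

lemma interior_std_simplex: "interior (std_simplex :: (real^'e::finite) set) = osimp"
proof
  show "osimp \<subseteq> interior (std_simplex :: (real^'e) set)"
    using open_osimp osimp_subset by (rule interior_maximal[rotated])
next
  show "interior (std_simplex :: (real^'e) set) \<subseteq> osimp"
  proof
    fix a :: "real^'e" assume "a \<in> interior std_simplex"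
    then obtain e where e: "e > 0" "ball a e \<subseteq> std_simplex"
      using mem_interior by blast
    have pt: "a + c *\<^sub>R axis i 1 \<in> std_simplex" if "\<bar>c\<bar> < e" for c i
    proof -
      have "dist a (a + c *\<^sub>R axis i 1) = \<bar>c\<bar>"
        by (simp add: dist_norm norm_axis_1)
      then show ?thesis using e that by auto
    qed
    have pos: "0 < a $ i" for i
    proof -
      have "a + (- e/2) *\<^sub>R axis i 1 \<in> std_simplex"
        by (rule pt) (use e in simp)
      then have "0 \<le> (a + (- e/2) *\<^sub>R axis i 1) $ i"
        unfolding std_simplex_def by blast
      then show ?thesis using e by (simp add: axis_def)
    qed
    obtain i0 :: 'e where True by blast
    have "a + (e/2) *\<^sub>R axis i0 1 \<in> std_simplex"
      by (rule pt) (use e in simp)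
    then have "(\<Sum>j\<in>UNIV. (a + (e/2) *\<^sub>R axis i0 1) $ j) \<le> 1"
      unfolding std_simplex_def by blast
    moreover have "(\<Sum>j\<in>UNIV. (a + (e/2) *\<^sub>R axis i0 1) $ j) = (\<Sum>j\<in>UNIV. a $ j) + (e/2) * (\<Sum>j\<in>UNIV. axis i0 (1::real) $ j)"
      by (simp add: sum.distrib sum_distrib_left)
    ultimately have "(\<Sum>j\<in>UNIV. a $ j) + e/2 \<le> 1"
      by (simp add: sum_axis_comp)
    then show "a \<in> osimp" using pos e by (simp add: osimp_def)
  qed
qed

lemma convex_std_simplex: "convex (std_simplex :: (real^'e::finite) set)"
proof (unfold convex_def, intro ballI allI impI)
  fix x y :: "real^'e" and u v :: real
  assume x: "x \<in> std_simplex" and y: "y \<in> std_simplex" and uv: "0 \<le> u" "0 \<le> v" "u + v = 1"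
  have "(\<Sum>i\<in>UNIV. (u *\<^sub>R x + v *\<^sub>R y) $ i) = u * (\<Sum>i\<in>UNIV. x $ i) + v * (\<Sum>i\<in>UNIV. y $ i)"
    by (simp add: sum.distrib sum_distrib_left)
  also have "\<dots> \<le> u * 1 + v * 1"
    using x y uv by (intro add_mono mult_left_mono) (auto simp: std_simplex_def)
  finally have "(\<Sum>i\<in>UNIV. (u *\<^sub>R x + v *\<^sub>R y) $ i) \<le> 1" using uv by simp
  moreover have "0 \<le> (u *\<^sub>R x + v *\<^sub>R y) $ i" for i
    using x y uv by (auto simp: std_simplex_def intro!: add_nonneg_nonneg mult_nonneg_nonneg)
  ultimately show "u *\<^sub>R x + v *\<^sub>R y \<in> std_simplex" by (simp add: std_simplex_def)
qed

lemma osimp_nonempty: "osimp \<noteq> ({} :: (real^'e::finite) set)"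
proof -
  let ?c = "(\<chi> i. 1 / (2 * real CARD('e))) :: real^'e"
  have cp: "0 < real CARD('e)" by simp
  have "(\<Sum>i\<in>UNIV. ?c $ i) = real CARD('e) * (1 / (2 * real CARD('e)))"
    by simp
  also have "\<dots> = 1/2" using cp by (simp add: field_simps)
  finally have "?c \<in> osimp" using cp by (simp add: osimp_def)
  then show ?thesis by blast
qed

lemma rel_interior_std_simplex: "rel_interior (std_simplex :: (real^'e::finite) set) = osimp"
proof -
  have "interior (std_simplex :: (real^'e) set) \<noteq> {}"
    unfolding interior_std_simplex by (rule osimp_nonempty)
  then show ?thesis
    using rel_interior_nonempty_interior interior_std_simplex by metis
qed

lemma C1_osimp:
  assumes "C1_on_open_faces (\<sigma> :: real^'d::finite \<Rightarrow> real^'n::finite)"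
  obtains D where "\<And>b. b \<in> osimp \<Longrightarrow> (\<sigma> has_derivative blinfun_apply (D b)) (at b)"
    "continuous_on osimp D"
proof -
  have "std_simplex face_of (std_simplex :: (real^'d) set)"
    by (rule face_of_refl[OF convex_std_simplex])
  moreover have "std_simplex \<noteq> ({} :: (real^'d) set)"
    using osimp_nonempty osimp_subset by blast
  ultimately have "C1_on \<sigma> (rel_interior std_simplex)"
    using assms unfolding C1_on_open_faces_def by (simp only: simp_thms)
  then have "C1_on \<sigma> osimp" by (simp only: rel_interior_std_simplex)
  then obtain D where D: "\<forall>x\<in>osimp. (\<sigma> has_derivative blinfun_apply (D x)) (at x within osimp)"
    "continuous_on osimp D" unfolding C1_on_def by (elim exE conjE) (rule that, assumption+)
  show ?thesis
  proof (rule that[of D])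
    fix b :: "real^'d" assume b: "b \<in> osimp"
    have "at b within osimp = at b" by (rule at_within_open[OF b open_osimp])
    then show "(\<sigma> has_derivative blinfun_apply (D b)) (at b)" using D(1) b by metis
  qed (rule D(2))
qed

definition csum :: "real^'e::finite \<Rightarrow> real" where
  "csum a = (\<Sum>k\<in>UNIV. a $ k)"

definition cb :: "real^('d::finite option) \<Rightarrow> real^'d" where
  "cb a = (\<chi> i. a $ Some i / csum a)"

definition cproj :: "real^('d::finite option) \<Rightarrow> real^'d" where
  "cproj a = (\<chi> i. a $ Some i)"

lemma linear_csum: "linear (csum :: real^'e::finite \<Rightarrow> real)"
  by (rule linearI) (simp_all add: csum_def sum.distrib sum_distrib_left)

lemma linear_cproj: "linear (cproj :: real^('d::finite option) \<Rightarrow> real^'d)"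
  by (rule linearI) (simp_all add: cproj_def vec_eq_iff)

lemma cb_eq: "cb a = inverse (csum a) *\<^sub>R cproj a"
  by (simp add: cb_def cproj_def vec_eq_iff field_simps)

lemma cone_eq: "csum a \<noteq> 0 \<Longrightarrow> simplex_cone \<sigma> a = csum a *\<^sub>R \<sigma> (cb a)"
  by (simp add: simplex_cone_def Let_def csum_def cb_def)

lemma osimp_option:
  assumes a: "(a :: real^('d::finite option)) \<in> osimp"
  shows "0 < csum a" "csum a < 1" "cb a \<in> osimp"
proof -
  have pos: "0 < a $ k" for k using a by (simp add: osimp_def)
  have s: "csum a = a $ None + (\<Sum>i\<in>UNIV. a $ Some i)"
    unfolding csum_def by (rule sum_UNIV_option)
  have s0: "0 \<le> (\<Sum>i\<in>UNIV. a $ Some i)" using pos by (intro sum_nonneg) (simp add: less_imp_le)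
  show A0: "0 < csum a" using s s0 pos[of None] by simp
  show "csum a < 1" using a by (simp add: osimp_def csum_def)
  have "(\<Sum>i\<in>UNIV. cb a $ i) = (\<Sum>i\<in>UNIV. a $ Some i) / csum a"
    by (simp add: cb_def sum_divide_distrib)
  also have "\<dots> < 1" using A0 s pos[of None] by (simp add: divide_less_eq)
  finally show "cb a \<in> osimp"
    using A0 pos by (simp add: osimp_def cb_def)
qed

lemma cone_deriv:
  fixes \<sigma> :: "real^'d::finite \<Rightarrow> real^'n::finite"
  assumes a: "a \<in> osimp"
    and D: "(\<sigma> has_derivative blinfun_apply L) (at (cb a))"
  shows "(simplex_cone \<sigma> has_derivative
     (\<lambda>h. csum h *\<^sub>R \<sigma> (cb a) + L (cproj h - csum h *\<^sub>R cb a))) (at a)"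
proof -
  have A0: "csum a \<noteq> 0" using osimp_option(1)[OF a] by simp
  have dA: "(csum has_derivative csum) (at a)"
    by (rule linear_imp_has_derivative[OF linear_csum])
  have dP: "(cproj has_derivative cproj) (at a)"
    by (rule linear_imp_has_derivative[OF linear_cproj])
  have dI: "((\<lambda>x. inverse (csum x)) has_derivative (\<lambda>h. - (inverse (csum a) * csum h * inverse (csum a)))) (at a)"
    by (rule Deriv.has_derivative_inverse[OF A0 dA])
  have dB: "(cb has_derivative (\<lambda>h. inverse (csum a) *\<^sub>R cproj h + (- (inverse (csum a) * csum h * inverse (csum a))) *\<^sub>R cproj a)) (at a)"
    unfolding cb_eq[abs_def] by (rule has_derivative_scaleR[OF dI dP])
  have dS: "((\<sigma> \<circ> cb) has_derivative (L \<circ> (\<lambda>h. inverse (csum a) *\<^sub>R cproj h + (- (inverse (csum a) * csum h * inverse (csum a))) *\<^sub>R cproj a))) (at a)"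
    by (rule diff_chain_at[OF dB D])
  have dC: "((\<lambda>x. csum x *\<^sub>R (\<sigma> \<circ> cb) x) has_derivative
      (\<lambda>h. csum a *\<^sub>R (L \<circ> (\<lambda>h. inverse (csum a) *\<^sub>R cproj h + (- (inverse (csum a) * csum h * inverse (csum a))) *\<^sub>R cproj a)) h
           + csum h *\<^sub>R (\<sigma> \<circ> cb) a)) (at a)"
    by (rule has_derivative_scaleR[OF dA dS])
  have eqd: "(\<lambda>h. csum a *\<^sub>R (L \<circ> (\<lambda>h. inverse (csum a) *\<^sub>R cproj h + (- (inverse (csum a) * csum h * inverse (csum a))) *\<^sub>R cproj a)) h
           + csum h *\<^sub>R (\<sigma> \<circ> cb) a) = (\<lambda>h. csum h *\<^sub>R \<sigma> (cb a) + L (cproj h - csum h *\<^sub>R cb a))"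
  proof
    fix h :: "real^('d option)"
    have "csum a *\<^sub>R (inverse (csum a) *\<^sub>R cproj h + (- (inverse (csum a) * csum h * inverse (csum a))) *\<^sub>R cproj a)
        = cproj h - csum h *\<^sub>R cb a"
      using A0 by (simp add: cb_eq scaleR_add_right algebra_simps)
    then have "csum a *\<^sub>R L (inverse (csum a) *\<^sub>R cproj h + (- (inverse (csum a) * csum h * inverse (csum a))) *\<^sub>R cproj a)
        = L (cproj h - csum h *\<^sub>R cb a)"
      by (metis blinfun.scaleR_right)
    then show "csum a *\<^sub>R (L \<circ> (\<lambda>h. inverse (csum a) *\<^sub>R cproj h + (- (inverse (csum a) * csum h * inverse (csum a))) *\<^sub>R cproj a)) h
           + csum h *\<^sub>R (\<sigma> \<circ> cb) a = csum h *\<^sub>R \<sigma> (cb a) + L (cproj h - csum h *\<^sub>R cb a)"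
      by (simp add: add.commute)
  qed
  have dC': "((\<lambda>x. csum x *\<^sub>R \<sigma> (cb x)) has_derivative
     (\<lambda>h. csum h *\<^sub>R \<sigma> (cb a) + L (cproj h - csum h *\<^sub>R cb a))) (at a)"
    using dC unfolding eqd by (simp add: o_def)
  show ?thesis
  proof (rule has_derivative_transform_within_open[OF dC' open_osimp a])
    fix x :: "real^('d option)" assume "x \<in> osimp"
    then have "csum x \<noteq> 0" using osimp_option(1) by force
    then show "csum x *\<^sub>R \<sigma> (cb x) = simplex_cone \<sigma> x" by (simp add: cone_eq)
  qed
qed


lemma pullback_cone:
  fixes \<sigma> :: "real^'d::finite \<Rightarrow> real^'n::finite"
  assumes a: "a \<in> osimp"
    and D: "(\<sigma> has_derivative blinfun_apply L) (at (cb a))"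
    and am: "alt_multilinear (w (simplex_cone \<sigma> a))"
  shows "pullback_density (simplex_cone \<sigma>) w a =
     w (simplex_cone \<sigma> a) (\<lambda>k. case k of None \<Rightarrow> \<sigma> (cb a) | Some j \<Rightarrow> L (axis j 1))"
proof -
  have fd: "frechet_derivative (simplex_cone \<sigma>) (at a) =
     (\<lambda>h. csum h *\<^sub>R \<sigma> (cb a) + L (cproj h - csum h *\<^sub>R cb a))"
    using frechet_derivative_at[OF cone_deriv[OF a D]] by simp
  have col: "frechet_derivative (simplex_cone \<sigma>) (at a) (axis k 1) =
      \<sigma> (cb a) - L (cb a) + L (\<chi> i. if k = Some i then 1 else 0)" for k
  proof -
    have c1: "csum (axis k 1 :: real^('d option)) = 1"
      unfolding csum_def by (rule sum_axis_comp)
    have c2: "cproj (axis k 1 :: real^('d option)) = (\<chi> i. if k = Some i then 1 else 0)"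
      by (auto simp: cproj_def axis_def vec_eq_iff)
    show ?thesis unfolding fd c1 c2
      by (simp add: blinfun.diff_right algebra_simps)
  qed
  show ?thesis
    unfolding pullback_density_def col
    by (rule cone_alg[OF am bounded_linear.linear[OF blinfun.bounded_linear_right]])
qed

lemma am_restrict:
  fixes \<theta> :: "('d::finite option \<Rightarrow> 'v::real_vector) \<Rightarrow> real"
  assumes am: "alt_multilinear \<theta>"
  shows "alt_multilinear (\<lambda>us. \<theta> (\<lambda>k. case k of None \<Rightarrow> z | Some j \<Rightarrow> us j))"
  unfolding alt_multilinear_def
proof (intro conjI allI impI)
  fix vs :: "'d \<Rightarrow> 'v" and j
  have e: "(\<lambda>k. case k of None \<Rightarrow> z | Some j' \<Rightarrow> (vs(j := v)) j') =
      (\<lambda>k. case k of None \<Rightarrow> z | Some j' \<Rightarrow> vs j')(Some j := v)" for v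
    by (auto simp: fun_eq_iff split: option.split)
  show "linear (\<lambda>v. \<theta> (\<lambda>k. case k of None \<Rightarrow> z | Some j' \<Rightarrow> (vs(j := v)) j'))"
    unfolding e by (rule am_lin[OF am])
next
  fix vs :: "'d \<Rightarrow> 'v" and i j
  assume "i \<noteq> j \<and> vs i = vs j"
  then show "\<theta> (\<lambda>k. case k of None \<Rightarrow> z | Some j \<Rightarrow> vs j) = 0"
    by (intro am_zero[OF am, of "Some i" "Some j"]) auto
qed

lemma am_none_expand:
  fixes \<theta> :: "('d::finite option \<Rightarrow> real^'n::finite) \<Rightarrow> real"
  assumes am: "alt_multilinear \<theta>"
  shows "\<theta> (\<lambda>k. case k of None \<Rightarrow> z | Some j \<Rightarrow> u j) =
    (\<Sum>m\<in>UNIV. z $ m * \<theta> (\<lambda>k. case k of None \<Rightarrow> axis m 1 | Some j \<Rightarrow> u j))"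
proof -
  define W where "W = (\<lambda>k. case k of None \<Rightarrow> 0 | Some j \<Rightarrow> u j)"
  have e: "(\<lambda>k. case k of None \<Rightarrow> x | Some j \<Rightarrow> u j) = W(None := x)" for x
    by (auto simp: fun_eq_iff W_def split: option.split)
  have "\<theta> (W(None := (\<Sum>m\<in>UNIV. (z $ m) *\<^sub>R axis m 1))) = (\<Sum>m\<in>UNIV. z $ m * \<theta> (W(None := axis m 1)))"
    by (simp only: am_sum[OF am] am_scale[OF am])
  then have "\<theta> (W(None := z)) = (\<Sum>m\<in>UNIV. z $ m * \<theta> (W(None := axis m 1)))"
    by (simp only: vec_axis_expand[symmetric])
  then show ?thesis by (simp only: e)
qed

lemma form_formula:
  fixes \<theta> :: "('d::finite option \<Rightarrow> real^'n::finite) \<Rightarrow> real"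
  assumes am: "alt_multilinear \<theta>"
  shows "real (card {p. p permutes (UNIV :: 'd set)}) * \<theta> (\<lambda>k. case k of None \<Rightarrow> z | Some j \<Rightarrow> u j) =
    (\<Sum>g\<in>UNIV. (\<Sum>m\<in>UNIV. z $ m * \<theta> (\<lambda>k. case k of None \<Rightarrow> axis m 1 | Some j \<Rightarrow> axis (g j) 1))
        * det (\<chi> k j. u k $ g j))"
proof -
  have "real (card {p. p permutes (UNIV :: 'd set)}) * \<theta> (\<lambda>k. case k of None \<Rightarrow> z | Some j \<Rightarrow> u j) =
    (\<Sum>g\<in>UNIV. \<theta> (\<lambda>k. case k of None \<Rightarrow> z | Some j \<Rightarrow> axis (g j) 1) * det (\<chi> k j. u k $ g j))"
    using am_det_identity[OF am_restrict[OF am, of z], of u] by simp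
  also have "\<dots> = (\<Sum>g\<in>UNIV. (\<Sum>m\<in>UNIV. z $ m * \<theta> (\<lambda>k. case k of None \<Rightarrow> axis m 1 | Some j \<Rightarrow> axis (g j) 1))
        * det (\<chi> k j. u k $ g j))"
    by (rule sum.cong[OF refl], rule arg_cong2[where f="(*)"], rule am_none_expand[OF am], rule refl)
  finally show ?thesis .
qed



definition pmap :: "real \<times> (real^'d::finite) \<Rightarrow> real^('d option)" where
  "pmap p = (\<chi> k. case k of None \<Rightarrow> fst p | Some i \<Rightarrow> snd p $ i)"

lemma prod_UNIV_option: "(\<Prod>k\<in>(UNIV :: 'a::finite option set). f k) = f None * (\<Prod>i\<in>UNIV. f (Some i))"
  by (simp add: UNIV_option_conv prod.reindex)

lemma prod_Basis_vec: "(\<Prod>b\<in>(Basis :: (real^'m::finite) set). f b) = (\<Prod>k\<in>UNIV. f (axis k 1))"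
proof -
  have B: "(Basis :: (real^'m) set) = range (\<lambda>k. axis k 1)"
    by (auto simp: Basis_vec_def)
  have "inj (\<lambda>k::'m. axis k (1::real))"
    by (auto intro!: injI simp: axis_eq_axis)
  then show ?thesis unfolding B by (simp add: prod.reindex)
qed

lemma linear_pmap: "linear (pmap :: real \<times> (real^'d::finite) \<Rightarrow> real^('d option))"
  by (rule linearI) (auto simp: pmap_def vec_eq_iff split: option.split)

lemma continuous_pmap: "continuous_on UNIV (pmap :: real \<times> (real^'d::finite) \<Rightarrow> real^('d option))"
  by (rule linear_continuous_on[OF linear_conv_bounded_linear[THEN iffD1, OF linear_pmap]])

lemma pmap_measurable[measurable]: "(pmap :: real \<times> (real^'d::finite) \<Rightarrow> real^('d option)) \<in> borel_measurable borel"
  by (rule borel_measurable_continuous_onI[OF continuous_pmap])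

lemma all_opt: "(\<forall>k. P k) \<longleftrightarrow> P None \<and> (\<forall>i. P (Some i))"
  by (metis option.exhaust)

lemma box_Pair_eq: "box (a, b) (c, d) = box a c \<times> box (b::'b::euclidean_space) d"
  by (auto simp: box_def Basis_prod_def ball_Un inner_Pair)

lemma lborel_option: "distr lborel borel pmap = (lborel :: (real^('d::finite option)) measure)"
proof (rule lborel_eqI[symmetric])
  fix l u :: "real^('d option)"
  assume le: "\<And>b. b \<in> Basis \<Longrightarrow> l \<bullet> b \<le> u \<bullet> b"
  have lek: "l $ k \<le> u $ k" for k
    using le[of "axis k 1"] by (auto simp: Basis_vec_def inner_axis)
  have pre: "pmap -` box l u = box (l $ None, (\<chi> i. l $ Some i)) (u $ None, (\<chi> i. u $ Some i))"
  proof (rule set_eqI)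
    fix x :: "real \<times> (real^'d)"
    obtain t c where x: "x = (t, c)" by (cases x)
    have "x \<in> pmap -` box l u \<longleftrightarrow> (\<forall>k. l $ k < pmap (t, c) $ k \<and> pmap (t, c) $ k < u $ k)"
      by (simp add: x mem_box_cart)
    also have "\<dots> \<longleftrightarrow> (l $ None < pmap (t, c) $ None \<and> pmap (t, c) $ None < u $ None) \<and>
        (\<forall>i. l $ Some i < pmap (t, c) $ Some i \<and> pmap (t, c) $ Some i < u $ Some i)"
      by (rule all_opt)
    also have "\<dots> \<longleftrightarrow> x \<in> box (l $ None, (\<chi> i. l $ Some i)) (u $ None, (\<chi> i. u $ Some i))"
      by (simp add: x box_Pair_eq mem_box_cart pmap_def)
    finally show "x \<in> pmap -` box l u \<longleftrightarrow> x \<in> box (l $ None, (\<chi> i. l $ Some i)) (u $ None, (\<chi> i. u $ Some i))" .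
  qed
  have "emeasure (distr lborel borel pmap) (box l u) = emeasure lborel (pmap -` box l u)"
    by (subst emeasure_distr) auto
  also have "\<dots> = emeasure (lborel \<Otimes>\<^sub>M lborel) (box (l $ None) (u $ None) \<times> box (\<chi> i. l $ Some i) (\<chi> i. u $ Some i :: real^'d))"
    unfolding pre box_Pair_eq lborel_prod ..
  also have "\<dots> = emeasure lborel (box (l $ None) (u $ None)) * emeasure lborel (box (\<chi> i. l $ Some i) (\<chi> i. u $ Some i :: real^'d))"
    by (rule lborel.emeasure_pair_measure_Times) auto
  also have "\<dots> = ennreal (u $ None - l $ None) * ennreal (\<Prod>i\<in>UNIV. u $ Some i - l $ Some i)"
  proof -
    have "\<forall>b\<in>Basis. (\<chi> i. l $ Some i :: real^'d) \<bullet> b \<le> (\<chi> i. u $ Some i) \<bullet> b"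
      using lek by (auto simp: Basis_vec_def inner_axis)
    then show ?thesis
      using lek by (simp add: emeasure_lborel_box_eq prod_Basis_vec inner_axis)
  qed
  also have "\<dots> = ennreal (\<Prod>k\<in>UNIV. u $ k - l $ k)"
    using lek by (simp add: prod_UNIV_option ennreal_mult prod_nonneg)
  also have "(\<Prod>k\<in>UNIV. u $ k - l $ k) = (\<Prod>b\<in>Basis. (u - l) \<bullet> b)"
    by (simp add: prod_Basis_vec inner_axis)
  finally show "emeasure (distr lborel borel pmap) (box l u) = (\<Prod>b\<in>Basis. (u - l) \<bullet> b)" .
qed simp

lemma abs_int_nn:
  fixes f :: "real^'m::finite \<Rightarrow> real"
  assumes S: "open S" and fc: "continuous_on S f"
  shows "f absolutely_integrable_on S \<longleftrightarrow> (\<integral>\<^sup>+x. ennreal (indicator S x * \<bar>f x\<bar>) \<partial>lborel) < \<infinity>"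
proof -
  have m: "(\<lambda>x. indicator S x *\<^sub>R f x) \<in> borel_measurable borel"
    by (rule borel_measurable_continuous_on_indicator[OF borel_open[OF S] fc])
  have "f absolutely_integrable_on S \<longleftrightarrow> integrable lborel (\<lambda>x. indicator S x *\<^sub>R f x)"
    unfolding set_integrable_def by (rule integrable_completion) (use m in simp)
  also have "\<dots> \<longleftrightarrow> (\<integral>\<^sup>+x. ennreal (norm (indicator S x *\<^sub>R f x)) \<partial>lborel) < \<infinity>"
    using m by (simp add: integrable_iff_bounded)
  also have "(\<lambda>x. ennreal (norm (indicator S x *\<^sub>R f x))) = (\<lambda>x. ennreal (indicator S x * \<bar>f x\<bar>))"
    by (auto simp: indicator_def fun_eq_iff)
  finally show ?thesis .
qed

lemma continuous_on_cb: "continuous_on osimp (cb :: real^('d::finite option) \<Rightarrow> real^'d)"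
proof -
  have "continuous_on osimp (\<lambda>a::real^('d option). inverse (csum a) *\<^sub>R cproj a)"
  proof (intro continuous_intros)
    show "continuous_on osimp (csum :: real^('d option) \<Rightarrow> real)"
      by (rule linear_continuous_on[OF linear_conv_bounded_linear[THEN iffD1, OF linear_csum]])
    show "continuous_on osimp (cproj :: real^('d option) \<Rightarrow> real^'d)"
      by (rule linear_continuous_on[OF linear_conv_bounded_linear[THEN iffD1, OF linear_cproj]])
    show "\<forall>x\<in>osimp. csum (x :: real^('d option)) \<noteq> 0"
      using osimp_option(1) by force
  qed
  then show ?thesis by (simp add: cb_eq[abs_def])
qed

lemma G_pmap:
  fixes h :: "real^'d::finite \<Rightarrow> real"
  shows "indicator osimp (pmap (s - csum c, c)) * \<bar>h (cb (pmap (s - csum c, c)))\<bar> =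
    indicator {0<..<1} s * (indicator osimp (inverse s *\<^sub>R c) * \<bar>h (inverse s *\<^sub>R c)\<bar>)"
proof -
  let ?a = "pmap (s - csum c, c) :: real^('d option)"
  have cs: "csum ?a = s"
    by (simp add: csum_def sum_UNIV_option pmap_def)
  have cp: "cproj ?a = c" by (simp add: cproj_def pmap_def vec_eq_iff)
  show ?thesis
  proof (cases "0 < s \<and> s < 1")
    case True
    have cbe: "cb ?a = inverse s *\<^sub>R c" by (simp add: cb_eq cs cp)
    have "?a \<in> osimp \<longleftrightarrow> inverse s *\<^sub>R c \<in> osimp"
    proof -
      have "?a \<in> osimp \<longleftrightarrow> (\<forall>k. 0 < ?a $ k) \<and> s < 1"
        using cs by (simp add: osimp_def csum_def)
      also have "(\<forall>k. 0 < ?a $ k) \<longleftrightarrow> (0 < s - csum c \<and> (\<forall>i. 0 < c $ i))"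
        by (subst all_opt) (simp add: pmap_def)
      finally have "?a \<in> osimp \<longleftrightarrow> (0 < s - csum c \<and> (\<forall>i. 0 < c $ i)) \<and> s < 1" .
      also have "\<dots> \<longleftrightarrow> inverse s *\<^sub>R c \<in> osimp"
      proof -
        have "(\<Sum>i\<in>UNIV. (inverse s *\<^sub>R c) $ i) = csum c / s"
          by (simp add: csum_def sum_divide_distrib[symmetric] divide_inverse mult.commute sum_distrib_left)
        moreover have "0 < (inverse s *\<^sub>R c) $ i \<longleftrightarrow> 0 < c $ i" for i
          using True by (simp add: zero_less_mult_iff)
        ultimately show ?thesis
          using True by (auto simp: osimp_def divide_less_eq)
      qed
      finally show ?thesis .
    qed
    then show ?thesis using True cbe by (simp add: indicator_def)
  next
    case False
    have "?a \<notin> osimp" using osimp_option(1,2)[of ?a] cs False by auto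
    then show ?thesis using False by (simp add: indicator_def)
  qed
qed

lemma nn_scale_le:
  fixes H :: "real^'d::finite \<Rightarrow> real"
  assumes Hm[measurable]: "H \<in> borel_measurable borel" and s: "0 < s" "s \<le> 1"
  shows "(\<integral>\<^sup>+c. ennreal (H (inverse s *\<^sub>R c)) \<partial>lborel) \<le> (\<integral>\<^sup>+b. ennreal (H b) \<partial>lborel)"
proof -
  have si: "inverse s \<noteq> 0" using s by simp
  have "(\<integral>\<^sup>+b. ennreal (H b) \<partial>lborel) =
    (\<integral>\<^sup>+b. ennreal (H b) \<partial>(density (distr lborel borel (\<lambda>x. 0 + inverse s *\<^sub>R x)) (\<lambda>_. \<bar>inverse s\<bar> ^ DIM(real^'d))))"
    by (subst lborel_affine[OF si, where t="0::real^'d"]) simp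
  also have "\<dots> = (\<integral>\<^sup>+c. ennreal (\<bar>inverse s\<bar> ^ DIM(real^'d)) * ennreal (H (inverse s *\<^sub>R c)) \<partial>lborel)"
    by (simp add: nn_integral_density nn_integral_distr)
  finally have eq: "(\<integral>\<^sup>+b. ennreal (H b) \<partial>lborel) =
      (\<integral>\<^sup>+c. ennreal (\<bar>inverse s\<bar> ^ DIM(real^'d)) * ennreal (H (inverse s *\<^sub>R c)) \<partial>lborel)" .
  have one: "1 \<le> \<bar>inverse s\<bar> ^ DIM(real^'d)"
    using s by (intro one_le_power) (simp add: one_le_inverse)
  have "(\<integral>\<^sup>+c. ennreal (H (inverse s *\<^sub>R c)) \<partial>lborel) \<le>
      (\<integral>\<^sup>+c. ennreal (\<bar>inverse s\<bar> ^ DIM(real^'d)) * ennreal (H (inverse s *\<^sub>R c)) \<partial>lborel)"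
  proof (rule nn_integral_mono)
    fix c :: "real^'d"
    have "1 * ennreal (H (inverse s *\<^sub>R c)) \<le> ennreal (\<bar>inverse s\<bar> ^ DIM(real^'d)) * ennreal (H (inverse s *\<^sub>R c))"
      using one by (intro mult_right_mono) auto
    then show "ennreal (H (inverse s *\<^sub>R c)) \<le> ennreal (\<bar>inverse s\<bar> ^ DIM(real^'d)) * ennreal (H (inverse s *\<^sub>R c))"
      by simp
  qed
  then show ?thesis using eq by simp
qed

lemma cone_integrable:
  fixes h :: "real^'d::finite \<Rightarrow> real"
  assumes hi: "h absolutely_integrable_on osimp" and hc: "continuous_on osimp h"
  shows "(\<lambda>a. h (cb a)) absolutely_integrable_on (osimp :: (real^('d option)) set)"
proof -
  define H where "H b = indicator osimp b * \<bar>h b\<bar>" for b :: "real^'d"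
  have Hm[measurable]: "H \<in> borel_measurable borel"
  proof -
    have "(\<lambda>b. indicator osimp b *\<^sub>R \<bar>h b\<bar>) \<in> borel_measurable borel"
      by (rule borel_measurable_continuous_on_indicator[OF borel_open[OF open_osimp]])
         (intro continuous_intros hc)
    then show ?thesis by (simp add: H_def[abs_def])
  qed
  have HI: "(\<integral>\<^sup>+b. ennreal (H b) \<partial>lborel) < \<infinity>"
    using hi abs_int_nn[OF open_osimp hc] by (simp add: H_def)
  have cbc: "continuous_on osimp (\<lambda>a. h (cb a) :: real)"
    by (rule continuous_on_compose2[OF hc continuous_on_cb]) (use osimp_option(3) in blast)
  define G where "G a = indicator osimp a * \<bar>h (cb a)\<bar>" for a :: "real^('d option)"
  have Gm[measurable]: "G \<in> borel_measurable borel"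
  proof -
    have "(\<lambda>a. indicator osimp a *\<^sub>R \<bar>h (cb a)\<bar>) \<in> borel_measurable borel"
      by (rule borel_measurable_continuous_on_indicator[OF borel_open[OF open_osimp]])
         (intro continuous_intros cbc)
    then show ?thesis by (simp add: G_def[abs_def])
  qed
  have Gp: "G (pmap (s - csum c, c)) = indicator {0<..<1} s * H (inverse s *\<^sub>R c)" for s c
    unfolding G_def H_def by (rule G_pmap)
  have "(\<integral>\<^sup>+a. ennreal (G a) \<partial>lborel) = (\<integral>\<^sup>+a. ennreal (G a) \<partial>(distr lborel borel pmap))"
    by (simp add: lborel_option)
  also have "\<dots> = (\<integral>\<^sup>+p. ennreal (G (pmap p)) \<partial>lborel)"
    by (rule nn_integral_distr) auto
  also have "\<dots> = (\<integral>\<^sup>+p. ennreal (G (pmap p)) \<partial>(lborel \<Otimes>\<^sub>M lborel))"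
    by (simp add: lborel_prod)
  also have "\<dots> = (\<integral>\<^sup>+c. \<integral>\<^sup>+t. ennreal (G (pmap (t, c))) \<partial>lborel \<partial>lborel)"
    by (rule lborel_pair.nn_integral_snd[symmetric]) (unfold lborel_prod, measurable)
  also have "\<dots> = (\<integral>\<^sup>+c. \<integral>\<^sup>+s. ennreal (indicator {0<..<1} s * H (inverse s *\<^sub>R c)) \<partial>lborel \<partial>lborel)"
  proof (rule nn_integral_cong)
    fix c :: "real^'d"
    have "(\<integral>\<^sup>+t. ennreal (G (pmap (t, c))) \<partial>lborel) =
        ennreal \<bar>1::real\<bar> * (\<integral>\<^sup>+x. ennreal (G (pmap (- csum c + 1 * x, c))) \<partial>lborel)"
      by (rule nn_integral_real_affine) auto
    also have "\<dots> = (\<integral>\<^sup>+s. ennreal (indicator {0<..<1} s * H (inverse s *\<^sub>R c)) \<partial>lborel)"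
      using Gp by simp
    finally show "(\<integral>\<^sup>+t. ennreal (G (pmap (t, c))) \<partial>lborel) =
        (\<integral>\<^sup>+s. ennreal (indicator {0<..<1} s * H (inverse s *\<^sub>R c)) \<partial>lborel)" .
  qed
  also have "\<dots> = (\<integral>\<^sup>+s. \<integral>\<^sup>+c. ennreal (indicator {0<..<1} s * H (inverse s *\<^sub>R c)) \<partial>lborel \<partial>lborel)"
  proof -
    have m: "(\<lambda>(s, c). ennreal (indicator {0<..<1} s * H (inverse s *\<^sub>R c))) \<in> borel_measurable (lborel \<Otimes>\<^sub>M (lborel :: (real^'d) measure))"
    proof -
      have c1: "(\<lambda>p::real \<times> (real^'d). inverse (fst p) *\<^sub>R snd p) \<in> borel_measurable borel"
      proof -
        have f: "(\<lambda>p::real \<times> (real^'d). fst p) \<in> borel_measurable borel"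
          by (rule borel_measurable_continuous_onI) (intro continuous_intros)
        have g: "(\<lambda>p::real \<times> (real^'d). snd p) \<in> borel_measurable borel"
          by (rule borel_measurable_continuous_onI) (intro continuous_intros)
        show ?thesis by (rule borel_measurable_scaleR[OF borel_measurable_inverse[OF f] g])
      qed
      have c2: "(\<lambda>p::real \<times> (real^'d). H (inverse (fst p) *\<^sub>R snd p)) \<in> borel_measurable borel"
        using measurable_compose[OF c1 Hm] by (simp add: o_def)
      have c3: "(\<lambda>p::real \<times> (real^'d). indicator {0<..<(1::real)} (fst p) :: real) \<in> borel_measurable borel"
      proof -
        have f: "(\<lambda>p::real \<times> (real^'d). fst p) \<in> borel_measurable borel"
          by (rule borel_measurable_continuous_onI) (intro continuous_intros)
        have "(indicator {0<..<(1::real)} :: real \<Rightarrow> real) \<in> borel_measurable borel"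
          by (rule borel_measurable_indicator) simp
        from measurable_compose[OF f this] show ?thesis by (simp add: o_def)
      qed
      have "(\<lambda>p::real \<times> (real^'d). ennreal (indicator {0<..<1} (fst p) * H (inverse (fst p) *\<^sub>R snd p))) \<in> borel_measurable borel"
        by (intro measurable_compose[OF borel_measurable_times[OF c3 c2] measurable_ennreal])
      then show ?thesis unfolding lborel_prod by (simp add: case_prod_beta')
    qed
    show ?thesis using lborel_pair.Fubini[OF m] by simp
  qed
  also have "\<dots> \<le> (\<integral>\<^sup>+s. ennreal (indicator {0<..<(1::real)} s) * (\<integral>\<^sup>+b. ennreal (H b) \<partial>lborel) \<partial>lborel)"
  proof (rule nn_integral_mono)
    fix s :: real
    show "(\<integral>\<^sup>+c. ennreal (indicator {0<..<(1::real)} s * H (inverse s *\<^sub>R c)) \<partial>lborel) \<le>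
        ennreal (indicator {0<..<(1::real)} s) * (\<integral>\<^sup>+b. ennreal (H b) \<partial>lborel)"
    proof (cases "0 < s \<and> s < 1")
      case True
      then show ?thesis using nn_scale_le[OF Hm, of s] by simp
    next
      case False
      then show ?thesis by simp
    qed
  qed
  also have "\<dots> = emeasure lborel {0<..<(1::real)} * (\<integral>\<^sup>+b. ennreal (H b) \<partial>lborel)"
    by (simp add: nn_integral_multc ennreal_indicator nn_integral_indicator)
  also have "\<dots> < \<infinity>" using HI by (simp add: ennreal_mult_less_top)
  finally have "(\<integral>\<^sup>+a. ennreal (G a) \<partial>lborel) < \<infinity>" .
  then show ?thesis
    using abs_int_nn[OF open_osimp cbc] by (simp add: G_def)
qed



lemma compact_std_simplex: "compact (std_simplex :: (real^'e::finite) set)"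
unfolding compact_eq_bounded_closed
proof (rule conjI)
  have "std_simplex \<subseteq> cbox (0::real^'e) (\<chi> i. 1)"
  proof
    fix a :: "real^'e" assume a: "a \<in> std_simplex"
    have "a $ i \<le> 1" for i
    proof -
      have "a $ i \<le> (\<Sum>j\<in>UNIV. a $ j)"
        using a by (intro member_le_sum) (auto simp: std_simplex_def)
      then show ?thesis using a by (simp add: std_simplex_def)
    qed
    then show "a \<in> cbox 0 (\<chi> i. 1)" using a by (simp add: mem_box_cart std_simplex_def)
  qed
  then show "bounded (std_simplex :: (real^'e) set)" using bounded_cbox bounded_subset by blast
next
  have eq: "std_simplex = (\<Inter>i\<in>UNIV. {a::real^'e. 0 \<le> a $ i}) \<inter> {a. (\<Sum>i\<in>UNIV. a $ i) \<le> 1}"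
    by (auto simp: std_simplex_def)
  have "closed {a::real^'e. 0 \<le> a $ i}" for i
    by (rule closed_Collect_le) (intro continuous_intros)+
  then have "closed (\<Inter>i\<in>UNIV. {a::real^'e. 0 \<le> a $ i})" by (intro closed_INT) auto
  moreover have "closed {a::real^'e. (\<Sum>i\<in>UNIV. a $ i) \<le> 1}"
    by (rule closed_Collect_le) (intro continuous_intros)+
  ultimately show "closed (std_simplex :: (real^'e) set)" unfolding eq by (rule closed_Int)
qed

lemma sets_lebesgue_osimp: "(osimp :: (real^'e::finite) set) \<in> sets lebesgue"
  by (rule sets_completionI_sets) (simp add: borel_open open_osimp)

lemma test_cont:
  fixes D :: "real^'d::finite \<Rightarrow> (real^'d) \<Rightarrow>\<^sub>L (real^'n::finite)"
  assumes "continuous_on S D"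
  shows "continuous_on S (\<lambda>b. det (\<chi> k j. D b (axis k 1) $ g j))"
  unfolding det_def using assms by (intro continuous_intros) auto

theorem proposition2p7:
  fixes \<sigma> :: "real ^ 'd::finite \<Rightarrow> real ^ 'n::finite"
  assumes "continuous_on std_simplex \<sigma>"
    and "C1_on_open_faces \<sigma>"
    and "finite_volume \<sigma>"
  shows "finite_volume (simplex_cone \<sigma>)"
proof -
  note cont = assms(1) and C1 = assms(2) and fv = assms(3)
  obtain D where D: "\<And>b. b \<in> osimp \<Longrightarrow> (\<sigma> has_derivative blinfun_apply (D b)) (at b)"
    and Dc: "continuous_on osimp D"
    using C1_osimp[OF C1] by blast
  define M where "M g b = det (\<chi> k j. D b (axis k 1) $ g j)" for g :: "'d \<Rightarrow> 'n" and b
  define E where "E m g = (\<lambda>k. case k of None \<Rightarrow> axis m 1 | Some j \<Rightarrow> axis (g j) (1::real))"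
    for m :: 'n and g :: "'d \<Rightarrow> 'n"
  define N where "N = real (card {p. p permutes (UNIV :: 'd set)})"
  have N1: "1 \<le> N"
  proof -
    have "id \<in> {p. p permutes (UNIV :: 'd set)}" by (simp add: permutes_id)
    moreover have "finite {p. p permutes (UNIV :: 'd set)}" by (rule finite_permutations) simp
    ultimately have "card {p. p permutes (UNIV :: 'd set)} \<noteq> 0" using card_0_eq by blast
    then have "1 \<le> card {p. p permutes (UNIV :: 'd set)}" by linarith
    then show ?thesis unfolding N_def by linarith
  qed
  have Mc: "continuous_on osimp (M g)" for g
    unfolding M_def by (rule test_cont[OF Dc])
  have Mi: "M g absolutely_integrable_on osimp" for g
  proof -
    let ?w = "\<lambda>(x::real^'n) (vs::'d \<Rightarrow> real^'n). det (\<chi> k j. vs k $ g j)"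
    have "continuous_form (\<sigma> ` std_simplex) ?w"
      unfolding continuous_form_def using det_form_am[of g] by simp
    then have "pullback_density \<sigma> ?w absolutely_integrable_on interior std_simplex"
      using fv unfolding finite_volume_def by blast
    then have i: "pullback_density \<sigma> ?w absolutely_integrable_on osimp"
      by (simp add: interior_std_simplex)
    have "pullback_density \<sigma> ?w b = M g b" if "b \<in> osimp" for b
      using frechet_derivative_at[OF D[OF that]] by (simp add: pullback_density_def M_def)
    then show ?thesis
      using i set_integrable_cong[of lebesgue lebesgue osimp osimp "pullback_density \<sigma> ?w" "M g"] by simp
  qed
  have Mci: "(\<lambda>a. M g (cb a)) absolutely_integrable_on (osimp :: (real^('d option)) set)" for g
    by (rule cone_integrable[OF Mi Mc])
  obtain Bs where Bs: "\<And>b. b \<in> std_simplex \<Longrightarrow> norm (\<sigma> b) \<le> Bs"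
  proof -
    have "compact (\<sigma> ` std_simplex)"
      by (rule compact_continuous_image[OF cont compact_std_simplex])
    then obtain B where "\<forall>y\<in>\<sigma> ` std_simplex. norm y \<le> B"
      using compact_imp_bounded bounded_iff by metis
    then show ?thesis using that by blast
  qed
  have Bs0: "0 \<le> Bs"
  proof -
    have "(0::real^'d) \<in> std_simplex" by (simp add: std_simplex_def)
    then have "norm (\<sigma> 0) \<le> Bs" by (rule Bs)
    then show ?thesis using norm_ge_zero[of "\<sigma> 0"] by linarith
  qed
  define K where "K = (\<lambda>p. fst p *\<^sub>R \<sigma> (snd p)) ` ({0..1::real} \<times> std_simplex)"
  have Kc: "compact K"
    unfolding K_def
  proof (rule compact_continuous_image)
    show "compact ({0..1::real} \<times> (std_simplex :: (real^'d) set))"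
      by (intro compact_Times compact_Icc compact_std_simplex)
    have "continuous_on ({0..1::real} \<times> std_simplex) (\<lambda>p. \<sigma> (snd p))"
      by (rule continuous_on_compose2[OF cont continuous_on_snd]) auto
    then show "continuous_on ({0..1::real} \<times> std_simplex) (\<lambda>p. fst p *\<^sub>R \<sigma> (snd p))"
      by (intro continuous_intros)
  qed
  have Ksub: "K \<subseteq> simplex_cone \<sigma> ` std_simplex"
  proof
    fix y assume "y \<in> K"
    then obtain t b where t: "0 \<le> t" "t \<le> 1" and b: "b \<in> std_simplex" and y: "y = t *\<^sub>R \<sigma> b"
      by (auto simp: K_def)
    show "y \<in> simplex_cone \<sigma> ` std_simplex"
    proof (cases "t = 0")
      case True
      have "simplex_cone \<sigma> 0 = 0" by (simp add: simplex_cone_def)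
      moreover have "(0 :: real^('d option)) \<in> std_simplex" by (simp add: std_simplex_def)
      ultimately show ?thesis using y True by force
    next
      case False
      define a :: "real^('d option)" where "a = (\<chi> k. case k of None \<Rightarrow> t * (1 - (\<Sum>i\<in>UNIV. b $ i)) | Some i \<Rightarrow> t * b $ i)"
      have bs: "0 \<le> b $ i" "(\<Sum>i\<in>UNIV. b $ i) \<le> 1" for i using b by (auto simp: std_simplex_def)
      have ca: "csum a = t"
        by (simp add: csum_def sum_UNIV_option a_def sum_distrib_left[symmetric] algebra_simps)
      have "a \<in> std_simplex"
      proof -
        have "0 \<le> a $ k" for k
          using t bs by (cases k) (auto simp: a_def)
        moreover have "(\<Sum>k\<in>UNIV. a $ k) \<le> 1" using ca t by (simp add: csum_def)
        ultimately show ?thesis by (simp add: std_simplex_def)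
      qed
      moreover have "cb a = b" using False ca by (simp add: cb_def a_def vec_eq_iff)
      then have "simplex_cone \<sigma> a = y" using False ca y by (simp add: cone_eq)
      ultimately show ?thesis by force
    qed
  qed
  have Kin: "simplex_cone \<sigma> a \<in> K" if a: "a \<in> osimp" for a
  proof -
    have "simplex_cone \<sigma> a = csum a *\<^sub>R \<sigma> (cb a)"
      using osimp_option(1)[OF a] by (simp add: cone_eq)
    moreover have "(csum a, cb a) \<in> {0..1::real} \<times> std_simplex"
      using osimp_option[OF a] osimp_subset by auto
    ultimately show ?thesis unfolding K_def by force
  qed
  have conec: "continuous_on osimp (simplex_cone \<sigma>)"
  proof (rule continuous_at_imp_continuous_on, rule ballI)
    fix a :: "real^('d option)" assume a: "a \<in> osimp"
    show "isCont (simplex_cone \<sigma>) a"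
      by (rule has_derivative_continuous[OF cone_deriv[OF a D[OF osimp_option(3)[OF a]]]])
  qed
  show ?thesis
    unfolding finite_volume_def
  proof (intro allI impI)
    fix w :: "real^'n \<Rightarrow> ('d option \<Rightarrow> real^'n) \<Rightarrow> real"
    assume cf: "continuous_form (simplex_cone \<sigma> ` std_simplex) w"
    have am: "alt_multilinear (w (simplex_cone \<sigma> a))" if "a \<in> osimp" for a
      using cf that osimp_subset unfolding continuous_form_def by blast
    have wc: "continuous_on (simplex_cone \<sigma> ` std_simplex) (\<lambda>y. w y vs)" for vs
      using cf unfolding continuous_form_def by blast
    define F where "F a = (1 / N) * (\<Sum>g\<in>UNIV. (\<Sum>m\<in>UNIV. \<sigma> (cb a) $ m * w (simplex_cone \<sigma> a) (E m g)) * M g (cb a))" for a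
    have PF: "pullback_density (simplex_cone \<sigma>) w a = F a" if a: "a \<in> osimp" for a
    proof -
      have p: "pullback_density (simplex_cone \<sigma>) w a =
          w (simplex_cone \<sigma> a) (\<lambda>k. case k of None \<Rightarrow> \<sigma> (cb a) | Some j \<Rightarrow> D (cb a) (axis j 1))"
        by (rule pullback_cone[where w=w, OF a D[OF osimp_option(3)[OF a]] am[OF a]])
      have "N * w (simplex_cone \<sigma> a) (\<lambda>k. case k of None \<Rightarrow> \<sigma> (cb a) | Some j \<Rightarrow> D (cb a) (axis j 1)) =
          (\<Sum>g\<in>UNIV. (\<Sum>m\<in>UNIV. \<sigma> (cb a) $ m * w (simplex_cone \<sigma> a) (E m g)) * M g (cb a))"
        using form_formula[OF am[OF a], of "\<sigma> (cb a)" "\<lambda>j. D (cb a) (axis j 1)"]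
        by (simp add: N_def E_def M_def)
      then show ?thesis using N1 p by (simp add: F_def field_simps)
    qed
    have c1: "continuous_on osimp (\<lambda>a. w (simplex_cone \<sigma> a) vs)" for vs
      by (rule continuous_on_compose2[OF wc[of vs] conec]) (use osimp_subset in blast)
    have c2: "continuous_on osimp (\<lambda>a. \<sigma> (cb a))"
      by (rule continuous_on_compose2[OF cont continuous_on_cb]) (use osimp_option(3) osimp_subset in blast)
    have c3: "continuous_on osimp (\<lambda>a. M g (cb a))" for g
      by (rule continuous_on_compose2[OF Mc continuous_on_cb]) (use osimp_option(3) in blast)
    have Fc: "continuous_on osimp F"
      unfolding F_def by (intro continuous_intros c1 c2 c3)
    obtain Bw where Bw: "\<And>y. y \<in> K \<Longrightarrow> (\<Sum>m\<in>UNIV. \<Sum>g\<in>UNIV. \<bar>w y (E m g)\<bar>) \<le> Bw"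
    proof -
      have "continuous_on K (\<lambda>y. (\<Sum>m\<in>UNIV. \<Sum>g\<in>UNIV. \<bar>w y (E m g)\<bar>))"
        by (intro continuous_intros continuous_on_subset[OF wc Ksub])
      then have "compact ((\<lambda>y. (\<Sum>m\<in>UNIV. \<Sum>g\<in>UNIV. \<bar>w y (E m g)\<bar>)) ` K)"
        by (rule compact_continuous_image[OF _ Kc])
      then obtain B where B: "\<forall>z\<in>(\<lambda>y. (\<Sum>m\<in>UNIV. \<Sum>g\<in>UNIV. \<bar>w y (E m g)\<bar>)) ` K. norm z \<le> B"
        using compact_imp_bounded bounded_iff by metis
      show ?thesis
      proof (rule that[of B])
        fix y assume "y \<in> K"
        then have "norm (\<Sum>m\<in>UNIV. \<Sum>g\<in>UNIV. \<bar>w y (E m g)\<bar>) \<le> B" using B by blast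
        then show "(\<Sum>m\<in>UNIV. \<Sum>g\<in>UNIV. \<bar>w y (E m g)\<bar>) \<le> B" by simp
      qed
    qed
    have wb: "\<bar>w (simplex_cone \<sigma> a) (E m g)\<bar> \<le> Bw" if a: "a \<in> osimp" for a m g
    proof -
      have "\<bar>w (simplex_cone \<sigma> a) (E m g)\<bar> \<le> (\<Sum>g\<in>UNIV. \<bar>w (simplex_cone \<sigma> a) (E m g)\<bar>)"
        by (rule member_le_sum) auto
      also have "\<dots> \<le> (\<Sum>m\<in>UNIV. \<Sum>g\<in>UNIV. \<bar>w (simplex_cone \<sigma> a) (E m g)\<bar>)"
        by (rule member_le_sum[of _ _ "\<lambda>m. \<Sum>g\<in>UNIV. \<bar>w (simplex_cone \<sigma> a) (E m g)\<bar>"]) (auto intro: sum_nonneg)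
      also have "\<dots> \<le> Bw" by (rule Bw[OF Kin[OF a]])
      finally show ?thesis .
    qed
    have sb: "\<bar>\<sigma> (cb a) $ m\<bar> \<le> Bs" if a: "a \<in> osimp" for a m
      using component_le_norm_cart[of "\<sigma> (cb a)" m] Bs[of "cb a"] osimp_option(3)[OF a] osimp_subset by force
    define C where "C = real CARD('n) * (Bs * Bw)"
    define G where "G a = (\<Sum>g\<in>UNIV. C * \<bar>M g (cb a)\<bar>)" for a :: "real^('d option)"
    have bound: "norm (F a) \<le> G a" if a: "a \<in> osimp" for a
    proof -
      have inner: "\<bar>\<Sum>m\<in>UNIV. \<sigma> (cb a) $ m * w (simplex_cone \<sigma> a) (E m g)\<bar> \<le> C" for g
      proof -
        have "\<bar>\<Sum>m\<in>UNIV. \<sigma> (cb a) $ m * w (simplex_cone \<sigma> a) (E m g)\<bar> \<le>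
            (\<Sum>m\<in>UNIV. \<bar>\<sigma> (cb a) $ m\<bar> * \<bar>w (simplex_cone \<sigma> a) (E m g)\<bar>)"
          by (rule order_trans[OF sum_abs]) (simp add: abs_mult)
        also have "\<dots> \<le> (\<Sum>m\<in>(UNIV::'n set). Bs * Bw)"
          by (intro sum_mono mult_mono sb[OF a] wb[OF a]) (auto simp: Bs0)
        finally show ?thesis by (simp add: C_def)
      qed
      have "norm (F a) = (1 / N) * \<bar>\<Sum>g\<in>UNIV. (\<Sum>m\<in>UNIV. \<sigma> (cb a) $ m * w (simplex_cone \<sigma> a) (E m g)) * M g (cb a)\<bar>"
        using N1 by (simp add: F_def abs_mult)
      also have "\<dots> \<le> \<bar>\<Sum>g\<in>UNIV. (\<Sum>m\<in>UNIV. \<sigma> (cb a) $ m * w (simplex_cone \<sigma> a) (E m g)) * M g (cb a)\<bar>"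
        using N1 by (intro mult_left_le_one_le) auto
      also have "\<dots> \<le> (\<Sum>g\<in>UNIV. \<bar>\<Sum>m\<in>UNIV. \<sigma> (cb a) $ m * w (simplex_cone \<sigma> a) (E m g)\<bar> * \<bar>M g (cb a)\<bar>)"
        by (rule order_trans[OF sum_abs]) (simp add: abs_mult)
      also have "\<dots> \<le> G a"
        unfolding G_def by (intro sum_mono mult_right_mono inner) auto
      finally show ?thesis .
    qed
    have Gi: "G absolutely_integrable_on osimp"
      unfolding G_def
    proof (rule absolutely_integrable_sum)
      fix g :: "'d \<Rightarrow> 'n"
      have "(norm \<circ> (\<lambda>a. M g (cb a))) absolutely_integrable_on osimp"
        by (rule absolutely_integrable_norm[OF Mci])
      then have "(\<lambda>a. \<bar>M g (cb a)\<bar>) absolutely_integrable_on osimp" by (simp add: o_def)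
      from absolutely_integrable_scaleR_left[OF this, where c=C]
      show "(\<lambda>a. C * \<bar>M g (cb a)\<bar>) absolutely_integrable_on osimp" by simp
    qed simp
    have "F absolutely_integrable_on osimp"
    proof (rule measurable_bounded_by_integrable_imp_absolutely_integrable)
      show "F \<in> borel_measurable (lebesgue_on osimp)"
        by (rule continuous_imp_measurable_on_sets_lebesgue[OF Fc sets_lebesgue_osimp])
      show "G integrable_on osimp" using Gi absolutely_integrable_on_def by blast
    qed (use sets_lebesgue_osimp bound in auto)
    then have "pullback_density (simplex_cone \<sigma>) w absolutely_integrable_on osimp"
      using PF set_integrable_cong[of lebesgue lebesgue osimp osimp "pullback_density (simplex_cone \<sigma>) w" F] by simp
    then show "pullback_density (simplex_cone \<sigma>) w absolutely_integrable_on interior std_simplex"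
      by (simp add: interior_std_simplex)
  qed
qed

end
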